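(* Let $\tau$ be a tuple of positive integers, $0\le k\le \ell$, and $\hat P_\tau=C\sqcup O$ the $k$-decomposition. Let $F$ be a nonempty face of $\mathcal{O}_{C,O}(\tau)$ such that none of the nonnegativity inequalities $x_p\ge 0$ ($p\in C$) and none of the chain inequalities holds with equality at every point of $F$, let $\varphi$ be the partition of $O$ associated with $F$, and let $\pi=\varphi\cup\{\{c\}:c\in C\}$. Then the quotient poset $\hat P_\tau/\pi$ is of the form $\hat P_{\tau'}$ for some tuple $\tau'$ of positive integers; that is, after removing its minimum $\{\hat0\}$ and its maximum (the block containing $\hat1$), it is isomorphic to $P_{\tau'}$.
   Context: Let $\tau=(\tau_1,\dots,\tau_\ell)$ be positive integers. The poset $P_\tau$ has elements $y^i_j$ ($1\le i\le\ell$, $1\le j\le\tau_i$) with $y^i_j<y^{i'}_{j'}$ iff $i<i'$; $Y^i=\{y^i_1,\dots,y^i_{\tau_i}\}$; for a tuple $\tau'$ of positive integers $P_{\tau'}$ is defined in the same way (the empty tuple giving the empty poset). $\hat P_\tau=P_\tau\cup\{\hat0,\hat1\}$ with new minimum $\hat0$ and maximum $\hat1$, $Y^0=\{\hat0\}$, $Y^{\ell+1}=\{\hat1\}$; $\prec$ is the covering relation. The $k$-decomposition is $C=Y^0\cup\dots\cup Y^k$, $O=Y^{k+1}\cup\dots\cup Y^{\ell+1}$. The chain-order polytope $\mathcal{O}_{C,O}(\tau)\subseteq\mathbb{R}^{\hat P_\tau}$ consists of all $x$ with $x_{\hat0}=0$, $x_{\hat1}=1$, $x_p\ge0$ for $p\in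 C$ (nonnegativity inequalities), $x_a\le x_b$ for $a,b\in O$ with $a\prec b$ (order inequalities), and $x_{p_1}+\dots+x_{p_k}\le x_q$ for all $p_i\in Y^i$ ($1\le i\le k$), $q\in Y^{k+1}$ (chain inequalities). The partition $\varphi$ of $O$ associated with $F$ has as blocks the connected components of the graph with vertex set $O$ and edges $\{a,b\}$ for all $a\prec b$ in $O$ with $x_a=x_b$ for every $x\in F$. The quotient poset $\hat P_\tau/\pi$ is the set of blocks of $\pi$ ordered by the transitive closure of "$B\le B'$ iff $p\le q$ for some $p\in B$, $q\in B'$". *)

theory Defs
  imports Complex_Main
begin

text \<open>Elements of \<open>\<hat>P_\<tau>\<close> are pairs (level, index). Level 0 holds \<open>\<hat>0 = (0,1)\<close>,
  level \<open>i\<close> (1 \<le> i \<le> \<ell>) holds \<open>y^i_j = (i,j)\<close> for 1 \<le> j \<le> \<tau>_i,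
  level \<open>\<ell>+1\<close> holds \<open>\<hat>1 = (\<ell>+1,1)\<close>. The tuple \<open>\<tau>\<close> is a list, \<open>\<tau>_i = \<tau>!(i-1)\<close>.\<close>

type_synonym elt = "nat \<times> nat"

definition hatP :: "nat list \<Rightarrow> elt set" where
  "hatP \<tau> = {(0,1)} \<union> {(i,j). 1 \<le> i \<and> i \<le> length \<tau> \<and> 1 \<le> j \<and> j \<le> \<tau> ! (i - 1)}
             \<union> {(length \<tau> + 1, 1)}"

definition P :: "nat list \<Rightarrow> elt set" where
  "P \<tau> = {(i,j). 1 \<le> i \<and> i \<le> length \<tau> \<and> 1 \<le> j \<and> j \<le> \<tau> ! (i - 1)}"

definition bot0 :: elt where "bot0 = (0,1)"
definition top1 :: "nat list \<Rightarrow> elt" where "top1 \<tau> = (length \<tau> + 1, 1)"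

definition ple :: "elt \<Rightarrow> elt \<Rightarrow> bool" where
  "ple a b \<longleftrightarrow> a = b \<or> fst a < fst b"

definition plt :: "elt \<Rightarrow> elt \<Rightarrow> bool" where
  "plt a b \<longleftrightarrow> ple a b \<and> a \<noteq> b"

definition covers :: "nat list \<Rightarrow> elt \<Rightarrow> elt \<Rightarrow> bool" where
  "covers \<tau> a b \<longleftrightarrow> a \<in> hatP \<tau> \<and> b \<in> hatP \<tau> \<and> plt a b \<and>
     \<not> (\<exists>c\<in>hatP \<tau>. plt a c \<and> plt c b)"

definition Ylev :: "nat list \<Rightarrow> nat \<Rightarrow> elt set" where
  "Ylev \<tau> i = {p \<in> hatP \<tau>. fst p = i}"

definition Cset :: "nat list \<Rightarrow> nat \<Rightarrow> elt set" where
  "Cset \<tau> k = (\<Union>i\<in>{0..k}. Ylev \<tau> i)"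

definition Oset :: "nat list \<Rightarrow> nat \<Rightarrow> elt set" where
  "Oset \<tau> k = (\<Union>i\<in>{k+1..length \<tau> + 1}. Ylev \<tau> i)"

text \<open>Chains selecting one element from each of \<open>Y^1,\<dots>,Y^k\<close>: \<open>p_i = (i, c i)\<close>.\<close>
definition chain_sel :: "nat list \<Rightarrow> nat \<Rightarrow> (nat \<Rightarrow> nat) \<Rightarrow> bool" where
  "chain_sel \<tau> k c \<longleftrightarrow> (\<forall>i\<in>{1..k}. (i, c i) \<in> Ylev \<tau> i)"

text \<open>Points of \<open>\<real>^{\<hat>P_\<tau>}\<close> are functions vanishing outside \<open>\<hat>P_\<tau>\<close>.\<close>
definition chain_order_polytope :: "nat list \<Rightarrow> nat \<Rightarrow> (elt \<Rightarrow> real) set" where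
  "chain_order_polytope \<tau> k = {x.
     (\<forall>p. p \<notin> hatP \<tau> \<longrightarrow> x p = 0) \<and>
     x bot0 = 0 \<and> x (top1 \<tau>) = 1 \<and>
     (\<forall>p\<in>Cset \<tau> k. 0 \<le> x p) \<and>
     (\<forall>a\<in>Oset \<tau> k. \<forall>b\<in>Oset \<tau> k. covers \<tau> a b \<longrightarrow> x a \<le> x b) \<and>
     (\<forall>c q. chain_sel \<tau> k c \<and> q \<in> Ylev \<tau> (k+1) \<longrightarrow> (\<Sum>i=1..k. x (i, c i)) \<le> x q)}"

definition is_face :: "nat list \<Rightarrow> (elt \<Rightarrow> real) set \<Rightarrow> (elt \<Rightarrow> real) set \<Rightarrow> bool" where
  "is_face \<tau> Q F \<longleftrightarrow> (\<exists>a b. (\<forall>x\<in>Q. (\<Sum>p\<in>hatP \<tau>. a p * x p) \<le> b) \<and>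
       F = {x\<in>Q. (\<Sum>p\<in>hatP \<tau>. a p * x p) = b})"

definition face_edges :: "nat list \<Rightarrow> nat \<Rightarrow> (elt \<Rightarrow> real) set \<Rightarrow> elt rel" where
  "face_edges \<tau> k F = {(a,b). a \<in> Oset \<tau> k \<and> b \<in> Oset \<tau> k \<and> covers \<tau> a b \<and>
                                 (\<forall>x\<in>F. x a = x b)}"

definition assoc_partition :: "nat list \<Rightarrow> nat \<Rightarrow> (elt \<Rightarrow> real) set \<Rightarrow> elt set set" where
  "assoc_partition \<tau> k F =
     Oset \<tau> k // (((face_edges \<tau> k F \<union> (face_edges \<tau> k F)\<inverse>)\<^sup>*) \<inter> (Oset \<tau> k \<times> Oset \<tau> k))"

definition quot_le :: "elt set set \<Rightarrow> elt set rel" where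
  "quot_le \<pi> = {(B,B'). B \<in> \<pi> \<and> B' \<in> \<pi> \<and> (\<exists>p\<in>B. \<exists>q\<in>B'. ple p q)}\<^sup>+"

end

theory Submission
  imports Defs
begin

lemma weak_iso:
  fixes S :: "'a set" and r :: "'a \<Rightarrow> nat"
  assumes fin: "finite S" and bS: "b \<in> S" and tS: "t \<in> S" and bt: "b \<noteq> t"
    and bmin: "\<forall>s\<in>S. s \<noteq> b \<longrightarrow> r b < r s"
    and tmax: "\<forall>s\<in>S. s \<noteq> t \<longrightarrow> r s < r t"
  shows "\<exists>\<tau>'. (\<forall>x\<in>set \<tau>'. 0 < x) \<and> (\<exists>f. bij_betw f (hatP \<tau>') S \<and>
           (\<forall>a\<in>hatP \<tau>'. \<forall>c\<in>hatP \<tau>'. ple a c \<longleftrightarrow> (a = c \<or> r (f a) < r (f c))))"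
proof -
  define V where "V = r ` S"
  define Lv where "Lv v = card {w\<in>V. w < v}" for v
  define L where "L s = Lv (r s)" for s
  have finV: "finite V" using fin V_def by simp
  have Lv_mono: "Lv v < Lv v'" if "v < v'" "v \<in> V" for v v'
    unfolding Lv_def using that finV by (intro psubset_card_mono) auto
  have Lv_mono2: "Lv v \<le> Lv v'" if "v \<le> v'" for v v'
    unfolding Lv_def using that finV by (intro card_mono) auto
  have Lv_iff: "Lv v < Lv v' \<longleftrightarrow> v < v'" if "v \<in> V" "v' \<in> V" for v v'
  proof
    assume "Lv v < Lv v'" thus "v < v'" using Lv_mono2[of v' v] by linarith
  qed (use Lv_mono that in blast)
  have L_iff: "L s < L s' \<longleftrightarrow> r s < r s'" if "s \<in> S" "s' \<in> S" for s s'
    using Lv_iff that unfolding L_def V_def by auto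
  define m where "m = card V - 1"
  have cV: "card V \<ge> 2"
  proof -
    have "{r b, r t} \<subseteq> V" using bS tS V_def by auto
    moreover have "r b < r t" using bmin tS bt by auto
    moreover have "card {r b, r t} = 2" using \<open>r b < r t\<close> by simp
    ultimately show ?thesis using finV card_mono by metis
  qed
  have Lb: "L b = 0"
  proof -
    have "{w\<in>V. w < r b} = {}" using bmin unfolding V_def by force
    thus ?thesis unfolding L_def Lv_def by simp
  qed
  have Lt: "L t = m"
  proof -
    have "{w\<in>V. w < r t} = V - {r t}" using tmax tS unfolding V_def by force
    thus ?thesis unfolding L_def Lv_def m_def using finV tS V_def by simp
  qed
  have LvV: "Lv ` V = {0..<card V}"
  proof (rule card_subset_eq)
    show "finite {0..<card V}" by simp
    show "Lv ` V \<subseteq> {0..<card V}"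
    proof
      fix x assume "x \<in> Lv ` V"
      then obtain v where v: "v \<in> V" "x = Lv v" by auto
      have "{w\<in>V. w < v} \<subset> V" using v by auto
      hence "Lv v < card V" unfolding Lv_def using finV psubset_card_mono by blast
      thus "x \<in> {0..<card V}" using v by simp
    qed
    have "inj_on Lv V"
    proof (rule inj_onI)
      fix v v' assume "v \<in> V" "v' \<in> V" "Lv v = Lv v'"
      thus "v = v'" using Lv_iff[of v v'] Lv_iff[of v' v] by (metis less_irrefl linorder_neqE_nat)
    qed
    thus "card (Lv ` V) = card {0..<card V}" by (simp add: card_image)
  qed
  have LS: "L ` S = {0..m}"
  proof -
    have "L ` S = Lv ` V" unfolding L_def V_def by auto
    also have "\<dots> = {0..m}" using LvV cV m_def by auto
    finally show ?thesis .
  qed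
  have m1: "m \<ge> 1" using cV m_def by simp
  define fib where "fib i = {s\<in>S. L s = i}" for i
  have fibfin: "finite (fib i)" for i using fin fib_def by simp
  have fibne: "fib i \<noteq> {}" if "i \<le> m" for i
  proof -
    have "i \<in> L ` S" using LS that by simp
    then obtain s where "s \<in> S" "L s = i" by blast
    thus ?thesis unfolding fib_def by blast
  qed
  have fib0: "fib 0 = {b}"
  proof -
    have "s = b" if "s \<in> S" "L s = 0" for s
    proof (rule ccontr)
      assume "s \<noteq> b"
      hence "r b < r s" using bmin that by blast
      hence "L b < L s" using L_iff[OF bS that(1)] by blast
      thus False using Lb that(2) by simp
    qed
    thus ?thesis using bS Lb unfolding fib_def by blast
  qed
  have fibm: "fib m = {t}"
  proof -
    have "s = t" if "s \<in> S" "L s = m" for s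
    proof (rule ccontr)
      assume "s \<noteq> t"
      hence "r s < r t" using tmax that by blast
      hence "L s < L t" using L_iff[OF that(1) tS] by blast
      thus False using Lt that(2) by simp
    qed
    thus ?thesis using tS Lt unfolding fib_def by blast
  qed
  define \<tau>' where "\<tau>' = map (\<lambda>i. card (fib i)) [1..<m]"
  have len: "length \<tau>' = m - 1" by (simp add: \<tau>'_def)
  have nth: "\<tau>' ! (i - 1) = card (fib i)" if "1 \<le> i" "i < m" for i
  proof -
    have "[1..<m] ! (i - 1) = i" using that by simp
    thus ?thesis using that by (simp add: \<tau>'_def)
  qed
  have pos: "\<forall>x\<in>set \<tau>'. 0 < x"
    using fibne fibfin unfolding \<tau>'_def by (auto simp: card_gt_0_iff)
  define H where "H = {(i,j). i \<le> m \<and> 1 \<le> j \<and> j \<le> card (fib i)}"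
  have hatH: "hatP \<tau>' = H"
  proof
    show "hatP \<tau>' \<subseteq> H"
    proof
      fix p assume p: "p \<in> hatP \<tau>'"
      obtain i j where ij: "p = (i,j)" by fastforce
      have "(i = 0 \<and> j = 1) \<or> (1 \<le> i \<and> i \<le> m - 1 \<and> 1 \<le> j \<and> j \<le> \<tau>'!(i-1)) \<or> (i = m \<and> j = 1)"
        using p len m1 unfolding hatP_def ij by auto
      thus "p \<in> H"
      proof (elim disjE)
        assume "1 \<le> i \<and> i \<le> m - 1 \<and> 1 \<le> j \<and> j \<le> \<tau>'!(i-1)"
        thus "p \<in> H" using nth[of i] ij H_def by auto
      qed (use ij H_def fib0 fibm in auto)
    qed
    show "H \<subseteq> hatP \<tau>'"
    proof
      fix p assume p: "p \<in> H"
      obtain i j where ij: "p = (i,j)" by fastforce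
      have "i = 0 \<or> i = m \<or> (1 \<le> i \<and> i < m)" using p ij H_def by auto
      thus "p \<in> hatP \<tau>'"
      proof (elim disjE)
        assume "i = 0" thus ?thesis using p ij H_def fib0 hatP_def by auto
      next
        assume "i = m" thus ?thesis using p ij H_def fibm hatP_def len m1 by auto
      next
        assume "1 \<le> i \<and> i < m" thus ?thesis using p ij H_def nth[of i] hatP_def len by auto
      qed
    qed
  qed
  define g where "g i = (SOME h. bij_betw h {1..card (fib i)} (fib i))" for i
  have gb: "bij_betw (g i) {1..card (fib i)} (fib i)" for i
    unfolding g_def using ex_bij_betw_nat_finite_1[OF fibfin] by (rule someI_ex)
  define f where "f p = g (fst p) (snd p)" for p
  have fL: "f p \<in> S \<and> L (f p) = fst p" if "p \<in> H" for p
  proof -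
    have "snd p \<in> {1..card (fib (fst p))}" using that H_def by auto
    hence "f p \<in> fib (fst p)" using bij_betw_apply[OF gb] unfolding f_def by blast
    thus ?thesis unfolding fib_def by auto
  qed
  have bij: "bij_betw f H S"
    unfolding bij_betw_def
  proof
    show "inj_on f H"
    proof (rule inj_onI)
      fix p q assume pq: "p \<in> H" "q \<in> H" "f p = f q"
      have fs: "fst p = fst q" using fL[OF pq(1)] fL[OF pq(2)] pq(3) by simp
      have "snd p \<in> {1..card (fib (fst p))}" "snd q \<in> {1..card (fib (fst p))}"
        using pq fs H_def by auto
      moreover have "inj_on (g (fst p)) {1..card (fib (fst p))}" using gb by (rule bij_betw_imp_inj_on)
      moreover have "g (fst p) (snd p) = g (fst p) (snd q)" using pq(3) fs unfolding f_def by simp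
      ultimately have "snd p = snd q" by (simp add: inj_on_eq_iff)
      thus "p = q" using fs by (simp add: prod_eq_iff)
    qed
    show "f ` H = S"
    proof
      show "f ` H \<subseteq> S" using fL by blast
      show "S \<subseteq> f ` H"
      proof
        fix s assume s: "s \<in> S"
        have "s \<in> fib (L s)" using s unfolding fib_def by blast
        then obtain j where j: "j \<in> {1..card (fib (L s))}" "g (L s) j = s"
          using bij_betw_imp_surj_on[OF gb[of "L s"]] by (metis imageE)
        have "L s \<in> L ` S" using s by (rule imageI)
        hence "L s \<le> m" unfolding LS by simp
        hence "(L s, j) \<in> H" using j(1) unfolding H_def by simp
        moreover have "f (L s, j) = s" using j(2) by (simp add: f_def)
        ultimately show "s \<in> f ` H" by (metis image_eqI)
      qed
    qed
  qed
  have ord: "\<forall>a\<in>hatP \<tau>'. \<forall>c\<in>hatP \<tau>'. ple a c \<longleftrightarrow> (a = c \<or> r (f a) < r (f c))"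
  proof (intro ballI)
    fix a c assume a: "a \<in> hatP \<tau>'" and c: "c \<in> hatP \<tau>'"
    have "r (f a) < r (f c) \<longleftrightarrow> fst a < fst c"
    proof -
      have "a \<in> H" "c \<in> H" using a c hatH by auto
      hence "f a \<in> S" "f c \<in> S" "L (f a) = fst a" "L (f c) = fst c" using fL by auto
      thus ?thesis using L_iff[of "f a" "f c"] by simp
    qed
    thus "ple a c \<longleftrightarrow> (a = c \<or> r (f a) < r (f c))" unfolding ple_def by simp
  qed
  have "bij_betw f (hatP \<tau>') S" using bij hatH by simp
  thus ?thesis using pos ord by blast
qed


lemma hatP_fst: "p \<in> hatP \<tau> \<Longrightarrow> fst p \<le> length \<tau> + 1"
  unfolding hatP_def by auto

lemma hatP_0: "p \<in> hatP \<tau> \<Longrightarrow> fst p = 0 \<Longrightarrow> p = (0,1)"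
  unfolding hatP_def by auto

lemma hatP_top: "p \<in> hatP \<tau> \<Longrightarrow> fst p = length \<tau> + 1 \<Longrightarrow> p = (length \<tau> + 1,1)"
  unfolding hatP_def by auto

lemma hatP_i1:
  assumes pos: "\<forall>t\<in>set \<tau>. 0 < t" and i: "i \<le> length \<tau> + 1"
  shows "(i,1) \<in> hatP \<tau>"
proof -
  consider "i = 0" | "1 \<le> i \<and> i \<le> length \<tau>" | "i = length \<tau> + 1" using i by linarith
  thus ?thesis
  proof cases
    case 2
    hence "\<tau> ! (i - 1) \<in> set \<tau>" by (intro nth_mem) linarith
    hence "\<tau> ! (i - 1) \<ge> 1" using pos by fastforce
    thus ?thesis using 2 unfolding hatP_def by simp
  qed (auto simp: hatP_def)
qed

lemma finite_hatP: "finite (hatP \<tau>)"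
proof -
  have "hatP \<tau> \<subseteq> {0..length \<tau> + 1} \<times> {0..Max (insert 1 (set \<tau>))}"
  proof
    fix p assume p: "p \<in> hatP \<tau>"
    obtain i j where ij: "p = (i,j)" by fastforce
    show "p \<in> {0..length \<tau> + 1} \<times> {0..Max (insert 1 (set \<tau>))}"
    proof (cases "1 \<le> i \<and> i \<le> length \<tau>")
      case True
      hence "j \<le> \<tau> ! (i - 1)" using p ij unfolding hatP_def by auto
      moreover have "\<tau> ! (i - 1) \<in> set \<tau>" using True by (intro nth_mem) linarith
      moreover have "\<tau> ! (i - 1) \<le> Max (insert 1 (set \<tau>))" using calculation(2) by (intro Max_ge) auto
      ultimately have "j \<le> Max (insert 1 (set \<tau>))" by linarith
      thus ?thesis using True ij by simp
    next
      case False
      hence "j = 1" "i \<le> length \<tau> + 1" using p ij unfolding hatP_def by auto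
      thus ?thesis using ij by simp
    qed
  qed
  thus ?thesis by (rule finite_subset) simp
qed

lemma plt_iff: "plt a c \<longleftrightarrow> fst a < fst c"
  unfolding plt_def ple_def by auto

lemma covers_iff:
  assumes pos: "\<forall>t\<in>set \<tau>. 0 < t"
  shows "covers \<tau> a b \<longleftrightarrow> a \<in> hatP \<tau> \<and> b \<in> hatP \<tau> \<and> fst b = fst a + 1"
proof
  assume c: "covers \<tau> a b"
  hence ab: "a \<in> hatP \<tau>" "b \<in> hatP \<tau>" "fst a < fst b"
    unfolding covers_def plt_iff by auto
  have "fst b = fst a + 1"
  proof (rule ccontr)
    assume "fst b \<noteq> fst a + 1"
    hence lt: "fst a + 1 < fst b" using ab by simp
    have "(fst a + 1, 1) \<in> hatP \<tau>" using hatP_i1[OF pos] hatP_fst[OF ab(2)] lt by simp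
    moreover have "plt a (fst a + 1, 1)" "plt (fst a + 1, 1) b"
      using lt unfolding plt_iff by auto
    ultimately show False using c unfolding covers_def by blast
  qed
  thus "a \<in> hatP \<tau> \<and> b \<in> hatP \<tau> \<and> fst b = fst a + 1" using ab by simp
next
  assume ab: "a \<in> hatP \<tau> \<and> b \<in> hatP \<tau> \<and> fst b = fst a + 1"
  have "plt a b" using ab unfolding plt_iff by auto
  moreover have "\<not> (plt a c \<and> plt c b)" for c
    using ab unfolding plt_iff by auto
  ultimately show "covers \<tau> a b" using ab unfolding covers_def by blast
qed

lemma Oset_iff: "p \<in> Oset \<tau> k \<longleftrightarrow> p \<in> hatP \<tau> \<and> k + 1 \<le> fst p"
  unfolding Oset_def Ylev_def using hatP_fst[of p \<tau>] by auto

lemma Cset_iff: "p \<in> Cset \<tau> k \<longleftrightarrow> p \<in> hatP \<tau> \<and> fst p \<le> k"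
  unfolding Cset_def Ylev_def by auto

lemma poly_order:
  assumes "x \<in> chain_order_polytope \<tau> k" "a \<in> Oset \<tau> k" "b \<in> Oset \<tau> k" "covers \<tau> a b"
  shows "x a \<le> x b"
proof -
  have "\<forall>a\<in>Oset \<tau> k. \<forall>b\<in>Oset \<tau> k. covers \<tau> a b \<longrightarrow> x a \<le> x b"
    using assms(1) unfolding chain_order_polytope_def mem_Collect_eq by (elim conjE)
  thus ?thesis using assms(2-4) by blast
qed

lemma poly_mono:
  assumes pos: "\<forall>t\<in>set \<tau>. 0 < t" and x: "x \<in> chain_order_polytope \<tau> k"
  shows "p \<in> Oset \<tau> k \<Longrightarrow> q \<in> Oset \<tau> k \<Longrightarrow> fst q = fst p + Suc n \<Longrightarrow> x p \<le> x q"
proof (induction n arbitrary: q)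
  case 0
  hence "covers \<tau> p q" using covers_iff[OF pos] Oset_iff by simp
  thus ?case using x 0 poly_order by blast
next
  case (Suc n)
  define q' where "q' = (fst p + Suc n, 1::nat)"
  have "fst q \<le> length \<tau> + 1" using Suc.prems(2) Oset_iff hatP_fst by blast
  hence "q' \<in> hatP \<tau>" using hatP_i1[OF pos] Suc.prems(3) q'_def by simp
  hence q'O: "q' \<in> Oset \<tau> k" using Suc.prems(1) Oset_iff q'_def by auto
  have "x p \<le> x q'" using Suc.IH[OF Suc.prems(1) q'O] q'_def by simp
  moreover have "covers \<tau> q' q" using covers_iff[OF pos] Suc.prems q'O Oset_iff q'_def by auto
  hence "x q' \<le> x q" using x q'O Suc.prems(2) poly_order by blast
  ultimately show ?case by linarith
qed

lemma poly_mono':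
  assumes pos: "\<forall>t\<in>set \<tau>. 0 < t" and x: "x \<in> chain_order_polytope \<tau> k"
    and "p \<in> Oset \<tau> k" "q \<in> Oset \<tau> k" "fst p < fst q"
  shows "x p \<le> x q"
proof -
  obtain n where "fst q = fst p + Suc n" using assms(5) by (metis add_Suc_right less_imp_Suc_add)
  thus ?thesis using poly_mono[OF pos x assms(3,4)] by blast
qed


theorem lemma3p5:
  fixes \<tau> :: "nat list" and k :: nat and F :: "(elt \<Rightarrow> real) set"
  assumes tau_pos: "\<forall>t\<in>set \<tau>. 0 < t"
    and k_le: "k \<le> length \<tau>"
    and face: "is_face \<tau> (chain_order_polytope \<tau> k) F"
    and nonempty: "F \<noteq> {}"
    and no_nonneg_tight: "\<forall>p\<in>Cset \<tau> k - {bot0}. \<not> (\<forall>x\<in>F. x p = 0)"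
    and no_chain_tight: "\<forall>c q. chain_sel \<tau> k c \<and> q \<in> Ylev \<tau> (k+1) \<longrightarrow>
                           \<not> (\<forall>x\<in>F. (\<Sum>i=1..k. x (i, c i)) = x q)"
  shows "\<exists>\<tau>' :: nat list. (\<forall>t\<in>set \<tau>'. 0 < t) \<and>
           (\<exists>f. bij_betw f (hatP \<tau>')
                  (assoc_partition \<tau> k F \<union> {{c} | c. c \<in> Cset \<tau> k}) \<and>
                (\<forall>a\<in>hatP \<tau>'. \<forall>b\<in>hatP \<tau>'. ple a b \<longleftrightarrow>
                   (f a, f b) \<in> quot_le (assoc_partition \<tau> k F \<union> {{c} | c. c \<in> Cset \<tau> k})))"
proof -
  define Ov where "Ov = Oset \<tau> k"
  define Cv where "Cv = Cset \<tau> k"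
  define E where "E = face_edges \<tau> k F"
  define R where "R = ((E \<union> E\<inverse>)\<^sup>*) \<inter> (Ov \<times> Ov)"
  define A where "A = assoc_partition \<tau> k F"
  define Cs where "Cs = {{c} | c. c \<in> Cv}"
  define \<Pi> where "\<Pi> = A \<union> Cs"
  have A_def': "A = Ov // R" unfolding A_def assoc_partition_def R_def E_def Ov_def by simp
  have FQ: "F \<subseteq> chain_order_polytope \<tau> k" using face unfolding is_face_def by blast
  have Eiff: "(a,b) \<in> E \<longleftrightarrow> a \<in> Ov \<and> b \<in> Ov \<and> covers \<tau> a b \<and> (\<forall>x\<in>F. x a = x b)" for a b
    unfolding E_def face_edges_def Ov_def by simp
  have OC: "Ov \<inter> Cv = {}" unfolding Ov_def Cv_def using Oset_iff Cset_iff by fastforce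
  have Ofin: "finite Ov" using finite_hatP[of \<tau>] unfolding Ov_def by (rule finite_subset[rotated]) (auto simp: Oset_iff)
  have Cfin: "finite Cv" using finite_hatP[of \<tau>] unfolding Cv_def by (rule finite_subset[rotated]) (auto simp: Cset_iff)
  have eqv: "equiv Ov R"
  proof (rule equivI)
    show "refl_on Ov R" unfolding refl_on_def R_def by auto
    show "R \<subseteq> Ov \<times> Ov" unfolding R_def by blast
    have "sym ((E \<union> E\<inverse>)\<^sup>*)" by (rule sym_rtrancl) (simp add: sym_Un_converse)
    thus "sym R" unfolding R_def sym_def by blast
    show "trans R"
    proof (rule transI)
      fix x y z assume "(x,y) \<in> R" "(y,z) \<in> R"
      thus "(x,z) \<in> R" unfolding R_def by (auto intro: rtrancl_trans)
    qed
  qed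
  have K1: "\<forall>x\<in>F. x a = x b" if "(a,b) \<in> (E \<union> E\<inverse>)\<^sup>*" for a b
    using that
  proof (induction rule: rtrancl_induct)
    case base thus ?case by simp
  next
    case (step y z)
    have "\<forall>x\<in>F. x y = x z" using step(2) Eiff by auto
    thus ?case using step(3) by auto
  qed
  have K2: "\<And>b. a \<in> Ov \<Longrightarrow> b \<in> Ov \<Longrightarrow> fst b = fst a + Suc n \<Longrightarrow> \<forall>x\<in>F. x a = x b \<Longrightarrow>
      (a,b) \<in> (E \<union> E\<inverse>)\<^sup>*" for a n
  proof (induction n)
    case 0
    have "covers \<tau> a b" using covers_iff[OF tau_pos] 0 unfolding Ov_def Oset_iff by simp
    hence "(a,b) \<in> E" using 0 Eiff by blast
    thus ?case by blast
  next
    case (Suc n)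
    define c where "c = (fst a + Suc n, 1::nat)"
    have "fst b \<le> length \<tau> + 1" using Suc.prems(2) unfolding Ov_def Oset_iff using hatP_fst by blast
    hence "c \<in> hatP \<tau>" using hatP_i1[OF tau_pos] Suc.prems(3) c_def by simp
    hence cO: "c \<in> Ov" using Suc.prems(1) unfolding Ov_def Oset_iff c_def by auto
    have xc: "\<forall>x\<in>F. x c = x b"
    proof
      fix x assume x: "x \<in> F"
      have "x a \<le> x c" using poly_mono'[OF tau_pos, of x k a c] FQ x Suc.prems(1) cO
        unfolding Ov_def c_def by auto
      moreover have "x c \<le> x b" using poly_mono'[OF tau_pos, of x k c b] FQ x Suc.prems cO
        unfolding Ov_def c_def by auto
      moreover have "x a = x b" using Suc.prems(4) x by blast
      ultimately show "x c = x b" by linarith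
    qed
    have "\<forall>x\<in>F. x a = x c" using xc Suc.prems(4) by auto
    hence "(a,c) \<in> (E \<union> E\<inverse>)\<^sup>*" using Suc.IH[OF Suc.prems(1) cO] c_def by simp
    moreover have "covers \<tau> c b" using covers_iff[OF tau_pos] cO Suc.prems(2,3) c_def
      unfolding Ov_def Oset_iff by simp
    hence "(c,b) \<in> E" using xc cO Suc.prems(2) Eiff by blast
    ultimately show ?case using rtrancl_into_rtrancl[of a c "E \<union> E\<inverse>" b] by blast
  qed
  have K2': "(a,b) \<in> R" if ab: "a \<in> Ov" "b \<in> Ov" "fst a < fst b" "\<forall>x\<in>F. x a = x b" for a b
  proof -
    obtain n where "fst b = fst a + Suc n" using ab(3) by (metis add_Suc_right less_imp_Suc_add)
    thus ?thesis using K2[OF ab(1,2)] ab(4) unfolding R_def using ab(1,2) by blast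
  qed
  have Asub: "B \<subseteq> Ov" "B \<noteq> {}" if "B \<in> A" for B
    using that in_quotient_imp_subset[OF eqv] in_quotient_imp_non_empty[OF eqv] unfolding A_def' by auto
  have Asame: "(a,b) \<in> R" if "B \<in> A" "a \<in> B" "b \<in> B" for B a b
    using quotient_eq_iff[OF eqv, of B B a b] that unfolding A_def' by blast
  have Aclosed: "b \<in> B" if "B \<in> A" "a \<in> B" "(a,b) \<in> R" for B a b
  proof -
    have bO: "b \<in> Ov" using that(3) unfolding R_def by blast
    have "R``{b} \<in> A" unfolding A_def' using bO by (rule quotientI)
    moreover have "b \<in> R``{b}" using equiv_class_self[OF eqv bO] .
    ultimately have "B = R``{b}" using quotient_eq_iff[OF eqv, of B "R``{b}" a b] that unfolding A_def' by blast
    thus ?thesis using \<open>b \<in> R``{b}\<close> by simp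
  qed
  have Aeq: "\<forall>x\<in>F. x a = x b" if "B \<in> A" "a \<in> B" "b \<in> B" for B a b
    using K1 Asame[OF that] unfolding R_def by blast
  have PiC: "\<exists>c. c \<in> Cv \<and> B = {c}" if "B \<in> \<Pi>" "B \<notin> A" for B
    using that unfolding \<Pi>_def Cs_def by blast
  have CPi: "{c} \<in> \<Pi>" if "c \<in> Cv" for c
    using that unfolding \<Pi>_def Cs_def by blast
  have Ov_hat: "p \<in> hatP \<tau>" and Ov_lev: "k + 1 \<le> fst p" if "p \<in> Ov" for p
    using that unfolding Ov_def Oset_iff by auto
  have Cv_hat: "p \<in> hatP \<tau>" and Cv_lev: "fst p \<le> k" if "p \<in> Cv" for p
    using that unfolding Cv_def Cset_iff by auto
  have blk: "B \<noteq> {}" "B \<subseteq> hatP \<tau>" "finite B" if hB: "B \<in> \<Pi>" for B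
  proof -
    have "B \<noteq> {} \<and> B \<subseteq> hatP \<tau>"
    proof (cases "B \<in> A")
      case True thus ?thesis using Asub[OF True] Ov_hat by blast
    next
      case False
      then obtain c where "c \<in> Cv" "B = {c}" using PiC[OF hB False] by blast
      thus ?thesis using Cv_hat by blast
    qed
    thus "B \<noteq> {}" "B \<subseteq> hatP \<tau>" by auto
    show "finite B" using \<open>B \<subseteq> hatP \<tau>\<close> finite_hatP by (rule finite_subset)
  qed
  have disj: "B = B'" if hyp: "B \<in> \<Pi>" "B' \<in> \<Pi>" "p \<in> B" "p \<in> B'" for B B' p
  proof (cases "B \<in> A")
    case BA: True
    hence pO: "p \<in> Ov" using Asub hyp(3) by blast
    show ?thesis
    proof (cases "B' \<in> A")
      case True
      have "(p,p) \<in> R" using pO unfolding R_def by blast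
      moreover have "B \<in> Ov // R" "B' \<in> Ov // R" using BA True unfolding A_def' by auto
      ultimately show ?thesis using quotient_eq_iff[OF eqv, of B B' p p] hyp(3,4) by blast
    next
      case False
      then obtain c where "c \<in> Cv" "B' = {c}" using PiC[OF hyp(2) False] by blast
      thus ?thesis using pO OC hyp(4) by blast
    qed
  next
    case BA: False
    then obtain c where c: "c \<in> Cv" "B = {c}" using PiC[OF hyp(1) BA] by blast
    show ?thesis
    proof (cases "B' \<in> A")
      case True
      thus ?thesis using c Asub OC hyp(3,4) by blast
    next
      case False
      then obtain c' where "c' \<in> Cv" "B' = {c'}" using PiC[OF hyp(2) False] by blast
      thus ?thesis using c hyp(3,4) by blast
    qed
  qed
  have G: False if hyp: "B \<in> \<Pi>" "B' \<in> \<Pi>" "B \<noteq> B'" "a \<in> B" "b \<in> B" "a' \<in> B'" "b' \<in> B'"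
      "fst a < fst b'" "fst a' < fst b" for B B' a b a' b'
  proof (cases "B \<in> A")
    case BA: True
    show False
    proof (cases "B' \<in> A")
      case BA': True
      have inO: "a \<in> Ov" "b \<in> Ov" "a' \<in> Ov" "b' \<in> Ov" using Asub BA BA' hyp(4-7) by blast+
      have "\<forall>x\<in>F. x a = x b'"
      proof
        fix x assume x: "x \<in> F"
        have xQ: "x \<in> chain_order_polytope \<tau> k" using x FQ by blast
        have "x a \<le> x b'" using poly_mono'[OF tau_pos xQ] inO hyp(8) unfolding Ov_def by blast
        moreover have "x a' \<le> x b" using poly_mono'[OF tau_pos xQ] inO hyp(9) unfolding Ov_def by blast
        moreover have "x b' = x a'" using Aeq[OF BA' hyp(7) hyp(6)] x by blast
        moreover have "x b = x a" using Aeq[OF BA hyp(5) hyp(4)] x by blast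
        ultimately show "x a = x b'" by linarith
      qed
      hence "(a,b') \<in> R" using K2' inO hyp(8) by blast
      hence "b' \<in> B" using Aclosed[OF BA hyp(4)] by blast
      thus False using disj[OF hyp(1,2) _ hyp(7)] hyp(3) by blast
    next
      case False
      then obtain c where c: "c \<in> Cv" "B' = {c}" using PiC[OF hyp(2) False] by blast
      have "k + 1 \<le> fst a" using Ov_lev Asub[OF BA] hyp(4) by blast
      moreover have "fst b' \<le> k" using Cv_lev c hyp(7) by blast
      ultimately show False using hyp(8) by linarith
    qed
  next
    case BA: False
    then obtain c where c: "c \<in> Cv" "B = {c}" using PiC[OF hyp(1) BA] by blast
    have bk: "fst b \<le> k" "fst a \<le> k" using Cv_lev c hyp(4,5) by blast+
    have ab: "a = c" "b = c" using c hyp(4,5) by blast+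
    show False
    proof (cases "B' \<in> A")
      case True
      have "k + 1 \<le> fst a'" using Ov_lev Asub[OF True] hyp(6) by blast
      thus False using bk hyp(9) by linarith
    next
      case False
      then obtain c' where c': "c' \<in> Cv" "B' = {c'}" using PiC[OF hyp(2) False] by blast
      have "a' = c'" "b' = c'" using c' hyp(6,7) by blast+
      thus False using ab hyp(8,9) by simp
    qed
  qed
  define lo where "lo B = Min (fst ` B)" for B :: "elt set"
  define hi where "hi B = Max (fst ` B)" for B :: "elt set"
  define pos where "pos B = lo B + hi B" for B :: "elt set"
  have lohi: "(\<exists>p\<in>B. fst p = lo B) \<and> (\<exists>q\<in>B. fst q = hi B) \<and> (\<forall>p\<in>B. lo B \<le> fst p \<and> fst p \<le> hi B)"
    if hB: "B \<in> \<Pi>" for B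
  proof -
    have fin: "finite (fst ` B)" and ne: "fst ` B \<noteq> {}" using blk[OF hB] by auto
    have "lo B \<in> fst ` B" unfolding lo_def using Min_in[OF fin ne] .
    moreover have "hi B \<in> fst ` B" unfolding hi_def using Max_in[OF fin ne] .
    moreover have "\<forall>p\<in>B. lo B \<le> fst p \<and> fst p \<le> hi B"
      unfolding lo_def hi_def using fin by auto
    ultimately show ?thesis by force
  qed
  have D_iff: "(\<exists>p\<in>B. \<exists>q\<in>B'. ple p q) \<longleftrightarrow> (B = B' \<or> pos B < pos B')"
    if hB: "B \<in> \<Pi>" "B' \<in> \<Pi>" for B B'
  proof
    assume "\<exists>p\<in>B. \<exists>q\<in>B'. ple p q"
    then obtain p q where pq: "p \<in> B" "q \<in> B'" "ple p q" by blast
    show "B = B' \<or> pos B < pos B'"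
    proof (cases "B = B'")
      case False
      have "p \<noteq> q" using disj[OF hB] pq False by blast
      hence lt: "fst p < fst q" using pq(3) unfolding ple_def by simp
      have "\<not> (lo B' < hi B)"
      proof
        assume "lo B' < hi B"
        obtain a' where a': "a' \<in> B'" "fst a' = lo B'" using lohi[OF hB(2)] by blast
        obtain b where b: "b \<in> B" "fst b = hi B" using lohi[OF hB(1)] by blast
        show False using G[OF hB False pq(1) b(1) a'(1) pq(2)] lt a' b \<open>lo B' < hi B\<close> by simp
      qed
      moreover have "lo B \<le> fst p" "fst q \<le> hi B'" using lohi hB pq by blast+
      ultimately show ?thesis unfolding pos_def using lt by linarith
    qed simp
  next
    assume h: "B = B' \<or> pos B < pos B'"
    show "\<exists>p\<in>B. \<exists>q\<in>B'. ple p q"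
    proof (cases "B = B'")
      case True
      obtain p where "p \<in> B" using blk[OF hB(1)] by blast
      thus ?thesis using True unfolding ple_def by blast
    next
      case False
      hence pl: "pos B < pos B'" using h by blast
      have "lo B < hi B'"
      proof (rule ccontr)
        assume "\<not> lo B < hi B'"
        moreover have "lo B \<le> hi B" "lo B' \<le> hi B'" using lohi[OF hB(1)] lohi[OF hB(2)] by force+
        ultimately show False using pl unfolding pos_def by linarith
      qed
      obtain p where p: "p \<in> B" "fst p = lo B" using lohi[OF hB(1)] by blast
      obtain q where q: "q \<in> B'" "fst q = hi B'" using lohi[OF hB(2)] by blast
      have "ple p q" using p q \<open>lo B < hi B'\<close> unfolding ple_def by simp
      thus ?thesis using p q by blast
    qed
  qed
  have quot: "quot_le \<Pi> = {(B,B'). B \<in> \<Pi> \<and> B' \<in> \<Pi> \<and> (B = B' \<or> pos B < pos B')}"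
    (is "_ = ?D")
  proof -
    have "{(B,B'). B \<in> \<Pi> \<and> B' \<in> \<Pi> \<and> (\<exists>p\<in>B. \<exists>q\<in>B'. ple p q)} = ?D"
      using D_iff by blast
    moreover have "trans ?D" unfolding trans_def by auto
    ultimately show ?thesis unfolding quot_le_def by simp
  qed
  define b0 where "b0 = {bot0}"
  have bot0C: "bot0 \<in> Cv" unfolding Cv_def Cset_iff bot0_def hatP_def by simp
  have b0Pi: "b0 \<in> \<Pi>" unfolding b0_def using CPi[OF bot0C] .
  have bmin: "\<forall>B\<in>\<Pi>. B \<noteq> b0 \<longrightarrow> pos b0 < pos B"
  proof (intro ballI impI)
    fix B assume hB: "B \<in> \<Pi>" and ne: "B \<noteq> b0"
    obtain q where q: "q \<in> B" using blk[OF hB] by blast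
    have "q \<noteq> bot0"
    proof
      assume "q = bot0"
      hence "B = b0" using disj[OF hB b0Pi q] unfolding b0_def by simp
      thus False using ne by simp
    qed
    moreover have "q \<in> hatP \<tau>" using blk[OF hB] q by blast
    ultimately have "fst q \<noteq> 0" using hatP_0 unfolding bot0_def by blast
    hence "ple bot0 q" unfolding ple_def bot0_def by simp
    hence "\<exists>p\<in>b0. \<exists>q\<in>B. ple p q" using q unfolding b0_def by blast
    thus "pos b0 < pos B" using D_iff[OF b0Pi hB] ne by blast
  qed
  define top where "top = top1 \<tau>"
  have topO: "top \<in> Ov" unfolding Ov_def Oset_iff top_def top1_def
    using hatP_i1[OF tau_pos, of "length \<tau> + 1"] k_le by simp
  define T where "T = R``{top}"
  have TA: "T \<in> A" unfolding T_def A_def' using topO by (rule quotientI)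
  have TPi: "T \<in> \<Pi>" using TA unfolding \<Pi>_def by blast
  have topT: "top \<in> T" unfolding T_def using equiv_class_self[OF eqv topO] .
  have tmax: "\<forall>B\<in>\<Pi>. B \<noteq> T \<longrightarrow> pos B < pos T"
  proof (intro ballI impI)
    fix B assume hB: "B \<in> \<Pi>" and ne: "B \<noteq> T"
    obtain p where p: "p \<in> B" using blk[OF hB] by blast
    have "p \<noteq> top"
    proof
      assume "p = top"
      hence "B = T" using disj[OF hB TPi p] topT by simp
      thus False using ne by simp
    qed
    moreover have "p \<in> hatP \<tau>" using blk[OF hB] p by blast
    ultimately have "fst p \<noteq> length \<tau> + 1" using hatP_top unfolding top_def top1_def by blast
    moreover have "fst p \<le> length \<tau> + 1" using hatP_fst \<open>p \<in> hatP \<tau>\<close> by blast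
    ultimately have "ple p top" unfolding ple_def top_def top1_def by simp
    hence "\<exists>p\<in>B. \<exists>q\<in>T. ple p q" using p topT by blast
    thus "pos B < pos T" using D_iff[OF hB TPi] ne by blast
  qed
  have bT: "b0 \<noteq> T"
  proof
    assume "b0 = T"
    hence "bot0 \<in> Ov" using Asub[OF TA] unfolding b0_def by blast
    thus False using bot0C OC by blast
  qed
  have finPi: "finite \<Pi>"
  proof -
    have "finite A" unfolding A_def' by (rule finite_quotient[OF Ofin]) (auto simp: R_def)
    moreover have "Cs = (\<lambda>c. {c}) ` Cv" unfolding Cs_def by blast
    hence "finite Cs" using Cfin by simp
    ultimately show ?thesis unfolding \<Pi>_def by simp
  qed
  from weak_iso[OF finPi b0Pi TPi bT bmin tmax] obtain \<tau>' where
    tpx: "(\<forall>x\<in>set \<tau>'. 0 < x) \<and> (\<exists>f. bij_betw f (hatP \<tau>') \<Pi> \<and>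
       (\<forall>a\<in>hatP \<tau>'. \<forall>c\<in>hatP \<tau>'. ple a c \<longleftrightarrow> (a = c \<or> pos (f a) < pos (f c))))"
    by (rule exE)
  hence tp: "\<forall>x\<in>set \<tau>'. 0 < x" by (rule conjunct1)
  from tpx have "\<exists>f. bij_betw f (hatP \<tau>') \<Pi> \<and>
       (\<forall>a\<in>hatP \<tau>'. \<forall>c\<in>hatP \<tau>'. ple a c \<longleftrightarrow> (a = c \<or> pos (f a) < pos (f c)))" by (rule conjunct2)
  then obtain f where fx: "bij_betw f (hatP \<tau>') \<Pi> \<and>
       (\<forall>a\<in>hatP \<tau>'. \<forall>c\<in>hatP \<tau>'. ple a c \<longleftrightarrow> (a = c \<or> pos (f a) < pos (f c)))" by (rule exE)
  hence fb: "bij_betw f (hatP \<tau>') \<Pi>" by (rule conjunct1)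
  from fx have ford: "\<forall>a\<in>hatP \<tau>'. \<forall>c\<in>hatP \<tau>'. ple a c \<longleftrightarrow> (a = c \<or> pos (f a) < pos (f c))" by (rule conjunct2)
  have ord2: "\<forall>a\<in>hatP \<tau>'. \<forall>c\<in>hatP \<tau>'. ple a c \<longleftrightarrow> (f a, f c) \<in> quot_le \<Pi>"
  proof (intro ballI)
    fix a c assume a: "a \<in> hatP \<tau>'" and c: "c \<in> hatP \<tau>'"
    have fa: "f a \<in> \<Pi>" using bij_betw_apply[OF fb a] .
    have fc: "f c \<in> \<Pi>" using bij_betw_apply[OF fb c] .
    have inj: "f a = f c \<longleftrightarrow> a = c" using inj_on_eq_iff[OF bij_betw_imp_inj_on[OF fb] a c] .
    have q: "(f a, f c) \<in> quot_le \<Pi> \<longleftrightarrow> (f a = f c \<or> pos (f a) < pos (f c))"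
      using fa fc unfolding quot by simp
    have "ple a c \<longleftrightarrow> (a = c \<or> pos (f a) < pos (f c))" using ford a c by blast
    thus "ple a c \<longleftrightarrow> (f a, f c) \<in> quot_le \<Pi>" using q inj by simp
  qed
  have PiEq: "\<Pi> = assoc_partition \<tau> k F \<union> {{c} | c. c \<in> Cset \<tau> k}"
    unfolding \<Pi>_def A_def Cs_def Cv_def by simp
  have "bij_betw f (hatP \<tau>') \<Pi> \<and> (\<forall>a\<in>hatP \<tau>'. \<forall>c\<in>hatP \<tau>'. ple a c \<longleftrightarrow> (f a, f c) \<in> quot_le \<Pi>)"
    using fb ord2 by (rule conjI)
  hence ex: "\<exists>f. bij_betw f (hatP \<tau>') \<Pi> \<and> (\<forall>a\<in>hatP \<tau>'. \<forall>b\<in>hatP \<tau>'. ple a b \<longleftrightarrow> (f a, f b) \<in> quot_le \<Pi>)"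
    by (rule exI[of _ f])
  show ?thesis unfolding PiEq[symmetric] by (rule exI[of _ \<tau>'], rule conjI[OF tp ex])
qed

end
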